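(* Let $Q$ be a quantity space over a field $K$ and let $\mathsf{C}\in Q/{\sim}$. Then $\mathsf{C}$, with addition defined by $x+y=(\rho+\sigma)\cdot u$ whenever $u$ is a unit quantity for $\mathsf{C}$, $x=\rho\cdot u$ and $y=\sigma\cdot u$, and with scalar multiplication $(\lambda,x)\mapsto\lambda\cdot x$ inherited from $Q$, is a one-dimensional vector space over $K$.
   Context: A scalable monoid over a (unital, associative) ring $R$ is a monoid $X$ (identity $1_X$, product written $xy$) together with a map $R\times X\to X$, $(\alpha,x)\mapsto\alpha\cdot x$, such that $1\cdot x=x$, $\alpha\cdot(\beta\cdot x)=\alpha\beta\cdot x$ and $\alpha\cdot(xy)=(\alpha\cdot x)y=x(\alpha\cdot y)$. A quantity space over a field $K$ is a commutative scalable monoid $Q$ over $K$ for which there exists a basis, i.e. a finite set $\{e_1,\ldots,e_n\}$ of invertible elements of $Q$ such that every $x\in Q$ has a unique expansion $x=\mu\cdot\prod_{i=1}^n e_i^{k_i}$ with $\mu\in K$ and $k_i\in\mathbb{Z}$. On $Q$, $x\sim y$ iff $\alpha\cdot x=\beta\cdot y$ for some $\alpha,\beta\in K$; $Q/{\sim}$ is the set of equivalence classes (dimensions). A unit quantity for a class $\mathsf{C}$ is some $u\in\mathsf{C}$ such that every $x\in\mathsf{C}$ equals $\lambda\cdot u$ for some $\lambda\in K$, and $\lambda\cdot u=\lambda'\cdot u$ implies $\lambda=\lambda'$. (The sum $x+y$ so defined does not depend on the choice of unit quantity $u$.) *)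

theory Defs
  imports Main
begin

text \<open>A quantity space is modelled on an ambient type 'q carrying a commutative
 monoid structure (type class comm_monoid_mult: product and identity 1),
 together with a scalar action smul of the field 'k.\<close>

definition scalable_monoid :: "('k::field \<Rightarrow> 'q::monoid_mult \<Rightarrow> 'q) \<Rightarrow> bool" where
  "scalable_monoid smul \<longleftrightarrow>
     (\<forall>x. smul 1 x = x) \<and>
     (\<forall>a b x. smul a (smul b x) = smul (a * b) x) \<and>
     (\<forall>a x y. smul a (x * y) = smul a x * y \<and> smul a (x * y) = x * smul a y)"

definition invertible_q :: "'q::monoid_mult \<Rightarrow> bool" where
  "invertible_q e \<longleftrightarrow> (\<exists>y. e * y = 1 \<and> y * e = 1)"

definition inv_q :: "'q::monoid_mult \<Rightarrow> 'q" where
  "inv_q e = (THE y. e * y = 1 \<and> y * e = 1)"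

definition zpow_q :: "'q::monoid_mult \<Rightarrow> int \<Rightarrow> 'q" where
  "zpow_q e k = (if 0 \<le> k then e ^ nat k else inv_q e ^ nat (- k))"

definition is_qbasis :: "('k::field \<Rightarrow> 'q::comm_monoid_mult \<Rightarrow> 'q) \<Rightarrow> 'q set \<Rightarrow> bool" where
  "is_qbasis smul E \<longleftrightarrow> finite E \<and> (\<forall>e\<in>E. invertible_q e) \<and>
     (\<forall>x. (\<exists>\<mu> k. x = smul \<mu> (\<Prod>e\<in>E. zpow_q e (k e))) \<and>
          (\<forall>\<mu> k \<mu>' k'. x = smul \<mu> (\<Prod>e\<in>E. zpow_q e (k e)) \<longrightarrow>
                      x = smul \<mu>' (\<Prod>e\<in>E. zpow_q e (k' e)) \<longrightarrow>
                      \<mu> = \<mu>' \<and> (\<forall>e\<in>E. k e = k' e)))"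

definition quantity_space :: "('k::field \<Rightarrow> 'q::comm_monoid_mult \<Rightarrow> 'q) \<Rightarrow> bool" where
  "quantity_space smul \<longleftrightarrow> scalable_monoid smul \<and> (\<exists>E. is_qbasis smul E)"

definition qsim :: "('k::field \<Rightarrow> 'q \<Rightarrow> 'q) \<Rightarrow> ('q \<times> 'q) set" where
  "qsim smul = {(x, y). \<exists>\<alpha> \<beta>. smul \<alpha> x = smul \<beta> y}"

definition unit_quantity :: "('k::field \<Rightarrow> 'q \<Rightarrow> 'q) \<Rightarrow> 'q set \<Rightarrow> 'q \<Rightarrow> bool" where
  "unit_quantity smul C u \<longleftrightarrow> u \<in> C \<and> (\<forall>x\<in>C. \<exists>l. x = smul l u) \<and>
     (\<forall>l1 l2. smul l1 u = smul l2 u \<longrightarrow> l1 = l2)"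

definition class_add :: "('k::field \<Rightarrow> 'q \<Rightarrow> 'q) \<Rightarrow> 'q set \<Rightarrow> 'q \<Rightarrow> 'q \<Rightarrow> 'q" where
  "class_add smul C x y =
     (let u = (SOME u. unit_quantity smul C u);
          \<rho> = (THE \<rho>. x = smul \<rho> u);
          \<sigma> = (THE \<sigma>. y = smul \<sigma> u)
      in smul (\<rho> + \<sigma>) u)"

definition vector_space_on :: "'v set \<Rightarrow> ('v \<Rightarrow> 'v \<Rightarrow> 'v) \<Rightarrow> ('k::field \<Rightarrow> 'v \<Rightarrow> 'v) \<Rightarrow> bool" where
  "vector_space_on V add smul \<longleftrightarrow>
     (\<forall>x\<in>V. \<forall>y\<in>V. add x y \<in> V) \<and>
     (\<forall>a. \<forall>x\<in>V. smul a x \<in> V) \<and>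
     (\<forall>x\<in>V. \<forall>y\<in>V. \<forall>z\<in>V. add (add x y) z = add x (add y z)) \<and>
     (\<forall>x\<in>V. \<forall>y\<in>V. add x y = add y x) \<and>
     (\<exists>z\<in>V. (\<forall>x\<in>V. add z x = x) \<and> (\<forall>x\<in>V. \<exists>y\<in>V. add x y = z)) \<and>
     (\<forall>a. \<forall>x\<in>V. \<forall>y\<in>V. smul a (add x y) = add (smul a x) (smul a y)) \<and>
     (\<forall>a b. \<forall>x\<in>V. smul (a + b) x = add (smul a x) (smul b x)) \<and>
     (\<forall>a b. \<forall>x\<in>V. smul a (smul b x) = smul (a * b) x) \<and>
     (\<forall>x\<in>V. smul 1 x = x)"

definition vs_zero :: "'v set \<Rightarrow> ('v \<Rightarrow> 'v \<Rightarrow> 'v) \<Rightarrow> 'v" where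
  "vs_zero V add = (THE z. z \<in> V \<and> (\<forall>x\<in>V. add z x = x))"

definition one_dimensional_on :: "'v set \<Rightarrow> ('v \<Rightarrow> 'v \<Rightarrow> 'v) \<Rightarrow> ('k::field \<Rightarrow> 'v \<Rightarrow> 'v) \<Rightarrow> bool" where
  "one_dimensional_on V add smul \<longleftrightarrow> vector_space_on V add smul \<and>
     (\<exists>b\<in>V. (\<forall>a. smul a b = vs_zero V add \<longrightarrow> a = 0) \<and> (\<forall>x\<in>V. \<exists>a. x = smul a b))"

end

theory Submission
  imports Defs
begin

lemma cadd:
  assumes us: "(SOME u. unit_quantity smul C u) = u" and uq: "unit_quantity smul C u"
  shows "class_add smul C (smul a u) (smul b u) = smul (a+b) u"
proof -
  have inj: "\<And>l1 l2. smul l1 u = smul l2 u \<Longrightarrow> l1 = l2" using uq unfolding unit_quantity_def by blast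
  have "(THE \<rho>. smul a u = smul \<rho> u) = a" by (rule the_equality) (auto dest: inj)
  moreover have "(THE \<rho>. smul b u = smul \<rho> u) = b" by (rule the_equality) (auto dest: inj)
  ultimately show ?thesis unfolding class_add_def Let_def us by simp
qed

lemma core:
  fixes smul :: "'k::field \<Rightarrow> 'q::comm_monoid_mult \<Rightarrow> 'q"
  assumes sm: "scalable_monoid smul" and us: "(SOME u. unit_quantity smul C u) = u"
    and uq: "unit_quantity smul C u" and cl: "\<forall>l. smul l u \<in> C"
  shows "one_dimensional_on C (class_add smul C) smul"
proof -
  have inj: "\<And>l1 l2. smul l1 u = smul l2 u \<longleftrightarrow> l1 = l2" using uq unfolding unit_quantity_def by blast
  have mem: "\<And>x. x \<in> C \<longleftrightarrow> (\<exists>a. x = smul a u)" using uq cl unfolding unit_quantity_def by blast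
  have ball: "\<And>P. (\<forall>x\<in>C. P x) = (\<forall>a. P (smul a u))"
  proof
    fix P assume "\<forall>x\<in>C. P x" then show "\<forall>a. P (smul a u)" using cl by blast
  next
    fix P assume h: "\<forall>a. P (smul a u)" show "\<forall>x\<in>C. P x"
    proof
      fix x assume "x \<in> C" then obtain a where "x = smul a u" using mem by blast
      then show "P x" using h by simp
    qed
  qed
  have bex: "\<And>P. (\<exists>x\<in>C. P x) = (\<exists>a. P (smul a u))"
  proof
    fix P assume "\<exists>x\<in>C. P x" then obtain x where "x \<in> C" "P x" by blast
    then obtain a where "x = smul a u" using mem by blast
    then show "\<exists>a. P (smul a u)" using \<open>P x\<close> by blast
  next
    fix P assume "\<exists>a. P (smul a u)" then show "\<exists>x\<in>C. P x" using cl by blast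
  qed
  have sa: "\<And>a b. smul a (smul b u) = smul (a*b) u" using sm unfolding scalable_monoid_def by blast
  have s1: "smul 1 u = u" using sm unfolding scalable_monoid_def by blast
  note ca = cadd[OF us uq]
  have z: "vs_zero C (class_add smul C) = smul 0 u"
    unfolding vs_zero_def
  proof (rule the_equality)
    show "smul 0 u \<in> C \<and> (\<forall>x\<in>C. class_add smul C (smul 0 u) x = x)"
      using cl by (simp add: ball ca)
  next
    fix z assume h: "z \<in> C \<and> (\<forall>x\<in>C. class_add smul C z x = x)"
    then obtain c where "z = smul c u" using mem by blast
    have "class_add smul C z (smul 0 u) = smul 0 u" using h cl by blast
    then have "smul (c+0) u = smul 0 u" using ca \<open>z = smul c u\<close> by simp
    then show "z = smul 0 u" using inj \<open>z = smul c u\<close> by simp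
  qed
  have vs: "vector_space_on C (class_add smul C) smul"
    unfolding vector_space_on_def ball bex
    apply (intro conjI)
    apply (simp add: ca cl)
    apply (simp add: sa cl)
    apply (simp add: ca add.assoc)
    apply (simp add: ca add.commute)
    apply (rule exI[of _ 0])
    apply (simp add: ca)
    apply (metis add.right_inverse)
    apply (simp add: ca sa distrib_left)
    apply (simp add: ca sa distrib_right)
    apply (simp add: sa mult.assoc)
    apply (simp add: sa)
    done
  show ?thesis unfolding one_dimensional_on_def z bex ball
    using vs
    apply (simp add: sa inj s1)
    apply (rule exI[of _ 1])
    by (simp add: s1 sa)
qed

theorem proposition3p9:
  fixes smul :: "'k::field \<Rightarrow> 'q::comm_monoid_mult \<Rightarrow> 'q"
    and C :: "'q set"
  assumes "quantity_space smul"
    and "C \<in> UNIV // qsim smul"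
  shows "one_dimensional_on C (class_add smul C) smul"
proof -
  have sm: "scalable_monoid smul" and "\<exists>E. is_qbasis smul E" using assms(1) unfolding quantity_space_def by auto
  then obtain E where E: "is_qbasis smul E" by blast
  define mono where "mono k = (\<Prod>e\<in>E. zpow_q e (k e))" for k :: "'q \<Rightarrow> int"
  have ex: "\<And>x. \<exists>\<mu> k. x = smul \<mu> (mono k)" using E unfolding is_qbasis_def mono_def by blast
  have un: "\<And>x \<mu> k \<mu>' k'. x = smul \<mu> (mono k) \<Longrightarrow> x = smul \<mu>' (mono k') \<Longrightarrow> \<mu> = \<mu>' \<and> (\<forall>e\<in>E. k e = k' e)"
    using E unfolding is_qbasis_def mono_def by blast
  have sa: "\<And>a b x. smul a (smul b x) = smul (a*b) x" using sm unfolding scalable_monoid_def by blast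
  have s1: "\<And>x. smul 1 x = x" using sm unfolding scalable_monoid_def by blast
  obtain x0 where C: "C = qsim smul `` {x0}" using assms(2) unfolding quotient_def by blast
  have memC: "\<And>x. x \<in> C \<longleftrightarrow> (\<exists>\<alpha> \<beta>. smul \<alpha> x0 = smul \<beta> x)" unfolding C qsim_def by auto
  obtain \<mu>0 k0 where x0: "x0 = smul \<mu>0 (mono k0)" using ex by blast
  define m0 where "m0 = mono k0"
  have cl: "\<forall>l. smul l m0 \<in> C"
  proof
    fix l
    have "smul l x0 = smul \<mu>0 (smul l m0)" unfolding x0 m0_def sa by (simp add: mult.commute)
    then show "smul l m0 \<in> C" using memC by blast
  qed
  have uq: "unit_quantity smul C m0"
    unfolding unit_quantity_def
  proof (intro conjI ballI allI impI)
    show "m0 \<in> C" using cl s1 by metis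
  next
    fix x assume "x \<in> C"
    then obtain \<alpha> \<beta> where ab: "smul \<alpha> x0 = smul \<beta> x" using memC by blast
    obtain \<mu> k where xk: "x = smul \<mu> (mono k)" using ex by blast
    have "smul \<alpha> x0 = smul (\<alpha>*\<mu>0) (mono k0)" "smul \<alpha> x0 = smul (\<beta>*\<mu>) (mono k)"
      using ab unfolding x0 xk sa by auto
    then have "\<forall>e\<in>E. k0 e = k e" using un by blast
    then have "mono k = m0" unfolding mono_def m0_def by (intro prod.cong) auto
    then show "\<exists>l. x = smul l m0" using xk by blast
  next
    fix l1 l2 assume "smul l1 m0 = smul l2 m0"
    then show "l1 = l2" using un unfolding m0_def by blast
  qed
  define u where "u = (SOME u. unit_quantity smul C u)"
  have uq': "unit_quantity smul C u" unfolding u_def using uq by (rule someI)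
  then have "u \<in> C" unfolding unit_quantity_def by blast
  then obtain c where "u = smul c m0" using uq unfolding unit_quantity_def by blast
  then have cl': "\<forall>l. smul l u \<in> C" using cl sa by simp
  show ?thesis by (rule core[OF sm u_def[symmetric] uq' cl'])
qed

end
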